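(* Let $A\in N_n$ be a Belitskii canonical form under $B_n$-similarity. If $Q\in M_n(\mathbb F)$ is a subpermutation such that $A\in B_nQB_n=\{BQB': B,B'\in B_n\}$, then $A\in QU_n=\{QU:U\in U_n\}$.
   Context: $\mathbb F$ is a field. $B_n$ (resp. $U_n$, $N_n$) denotes the set of $n\times n$ invertible upper triangular (resp. upper triangular with all diagonal entries $1$, strictly upper triangular) matrices over $\mathbb F$. Matrices $A,C$ are $G$-similar for a group $G$ if $C=BAB^{-1}$ for some $B\in G$. A subpermutation is a matrix each of whose rows and columns has at most one nonzero entry, and that entry equals $1$. Belitskii order: on positions $\{(i,j):1\le i<j\le n\}$ define $(i,j)\prec(i',j')$ iff $i>i'$, or $i=i'$ and $j<j'$; thus $(n-1,n)\prec(n-2,n-1)\prec(n-2,n)\prec(n-3,n-2)\prec\cdots\prec(1,n)$. Belitskii's algorithm for $B_n$-similarity on $N_n$: given $A\in N_n$ put $A^{(0)}=A$, $G^{(0)}=B_n$. For $k=0,1,\dots$, let $(p,q)$ be the $(k+1)$th position in the Belitskii order and look at the $(p,q)$ entries of all matrices $G^{(k)}$-similar to $A^{(k)}$: (a) if this entry is always $0$, or can take every value in $\mathbb F$, choose $A^{(k+1)}$ $G^{(k)}$-similar to $A^{(k)}$ with $(p,q)$ entry $0$; (b) if it can take exactly the values in $\mathbb F\setminus\{0\}$, choose $A^{(k+1)}$ $G^{(k)}$-similar to $A^{(k)}$ with $(p,q)$ entry $1$; (c) otherwise the entry is a constant $\lambda\ne0$, and $A^{(k+1)}=A^{(k)}$.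 Let $G^{(k+1)}$ be the subgroup of $g\in G^{(k)}$ such that $gA^{(k+1)}g^{-1}$ has the same entries as $A^{(k+1)}$ in the first $k+1$ positions. After the last position, the resulting matrix $A^\infty$ is the Belitskii canonical form of $A$ under $B_n$-similarity. A matrix in $N_n$ is called a Belitskii canonical form if it is the Belitskii canonical form of some matrix in $N_n$. *)

theory Defs
  imports "Jordan_Normal_Form.Matrix"
begin

(* Matrices are n x n matrices of type 'a mat, indices 0..n-1. *)

definition upper_tri_group :: "nat \<Rightarrow> 'a::field mat set" where
  "upper_tri_group n = {B \<in> carrier_mat n n. upper_triangular B \<and> invertible_mat B}"

definition unitri_group :: "nat \<Rightarrow> 'a::field mat set" where
  "unitri_group n = {U \<in> carrier_mat n n. upper_triangular U \<and> (\<forall>i<n. U $$ (i,i) = 1)}"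

definition strict_upper_set :: "nat \<Rightarrow> 'a::field mat set" where
  "strict_upper_set n = {A \<in> carrier_mat n n. upper_triangular A \<and> (\<forall>i<n. A $$ (i,i) = 0)}"

definition G_similar :: "'a::field mat set \<Rightarrow> 'a mat \<Rightarrow> 'a mat \<Rightarrow> bool" where
  "G_similar G A C \<longleftrightarrow> (\<exists>g\<in>G. \<exists>g'. similar_mat_wit C A g g')"

definition subpermutation :: "nat \<Rightarrow> 'a::field mat \<Rightarrow> bool" where
  "subpermutation n Q \<longleftrightarrow> Q \<in> carrier_mat n n \<and>
     (\<forall>i<n. \<forall>j<n. Q $$ (i,j) \<noteq> 0 \<longrightarrow>
        Q $$ (i,j) = 1 \<and> (\<forall>j'<n. j' \<noteq> j \<longrightarrow> Q $$ (i,j') = 0)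
                      \<and> (\<forall>i'<n. i' \<noteq> i \<longrightarrow> Q $$ (i',j) = 0))"

(* Belitskii order of the strictly upper positions (0-based):
   (n-2,n-1), (n-3,n-2), (n-3,n-1), ..., (0,n-1) *)
definition belitskii_positions :: "nat \<Rightarrow> (nat \<times> nat) list" where
  "belitskii_positions n = concat (map (\<lambda>i. map (\<lambda>j. (i,j)) [Suc i..<n]) (rev [0..<n - 1]))"

(* the groups G^(k) determined by a run As (As k = A^(k)) *)
fun belitskii_group :: "nat \<Rightarrow> (nat \<Rightarrow> 'a::field mat) \<Rightarrow> nat \<Rightarrow> 'a mat set" where
  "belitskii_group n As 0 = upper_tri_group n"
| "belitskii_group n As (Suc k) =
     {g \<in> belitskii_group n As k. \<forall>g' C. similar_mat_wit C (As (Suc k)) g g' \<longrightarrow>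
        (\<forall>p \<in> set (take (Suc k) (belitskii_positions n)). C $$ p = As (Suc k) $$ p)}"

definition belitskii_step :: "nat \<Rightarrow> (nat \<Rightarrow> 'a::field mat) \<Rightarrow> nat \<Rightarrow> bool" where
  "belitskii_step n As k \<longleftrightarrow>
    (let G = belitskii_group n As k; pq = belitskii_positions n ! k;
         vals = {C $$ pq | C. G_similar G (As k) C} in
     if vals = {0} \<or> vals = UNIV then
       G_similar G (As k) (As (Suc k)) \<and> As (Suc k) $$ pq = 0
     else if vals = UNIV - {0} then
       G_similar G (As k) (As (Suc k)) \<and> As (Suc k) $$ pq = 1
     else As (Suc k) = As k)"

definition belitskii_run :: "nat \<Rightarrow> 'a::field mat \<Rightarrow> (nat \<Rightarrow> 'a mat) \<Rightarrow> bool" where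
  "belitskii_run n A As \<longleftrightarrow> As 0 = A \<and>
     (\<forall>k < length (belitskii_positions n). belitskii_step n As k)"

definition belitskii_cf_of :: "nat \<Rightarrow> 'a::field mat \<Rightarrow> 'a mat \<Rightarrow> bool" where
  "belitskii_cf_of n A A' \<longleftrightarrow>
     (\<exists>As. belitskii_run n A As \<and> As (length (belitskii_positions n)) = A')"

definition is_belitskii_cf :: "nat \<Rightarrow> 'a::field mat \<Rightarrow> bool" where
  "is_belitskii_cf n A' \<longleftrightarrow> (\<exists>A \<in> strict_upper_set n. belitskii_cf_of n A A')"

end

theory Submission
  imports Defs "Jordan_Normal_Form.Determinant"
begin

lemma mult_entry:
  assumes "A \<in> carrier_mat n n" "B \<in> carrier_mat n n" "i < n" "j < n"
  shows "(A * B) $$ (i,j) = (\<Sum>k<n. A $$ (i,k) * B $$ (k,j))"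
  using assms by (auto simp: scalar_prod_def lessThan_atLeast0 intro!: sum.cong)

lemma triple_entry:
  assumes "g \<in> carrier_mat n n" "M \<in> carrier_mat n n" "h \<in> carrier_mat n n" "i < n" "j < n"
  shows "(g * M * h) $$ (i,j) = (\<Sum>b<n. \<Sum>a<n. g $$ (i,a) * M $$ (a,b) * h $$ (b,j))"
proof -
  have "(g * M * h) $$ (i,j) = (\<Sum>b<n. (g*M) $$ (i,b) * h $$ (b,j))"
    using assms by (intro mult_entry) auto
  also have "\<dots> = (\<Sum>b<n. \<Sum>a<n. g $$ (i,a) * M $$ (a,b) * h $$ (b,j))"
    using assms by (auto simp: mult_entry sum_distrib_right simp del: index_mult_mat intro!: sum.cong)
  finally show ?thesis .
qed

definition sup_mat :: "nat \<Rightarrow> 'a::zero mat \<Rightarrow> bool" where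
  "sup_mat n M \<longleftrightarrow> M \<in> carrier_mat n n \<and> (\<forall>a b. b \<le> a \<longrightarrow> a < n \<longrightarrow> M $$ (a,b) = 0)"

definition down_closed :: "(nat \<times> nat) set \<Rightarrow> bool" where
  "down_closed P \<longleftrightarrow> (\<forall>i j i' j'. (i,j) \<in> P \<longrightarrow> i \<le> i' \<longrightarrow> j' \<le> j \<longrightarrow> i' < j' \<longrightarrow> (i',j') \<in> P)"

lemma ut_D: "upper_triangular g \<Longrightarrow> g \<in> carrier_mat n n \<Longrightarrow> a < i \<Longrightarrow> i < n \<Longrightarrow> g $$ (i,a) = 0"
  by auto

lemma lemmaL:
  fixes g M M' h :: "'a::field mat"
  assumes g: "g \<in> carrier_mat n n" "upper_triangular g"
    and h: "h \<in> carrier_mat n n" "upper_triangular h"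
    and M: "sup_mat n M" and M': "sup_mat n M'"
    and P: "down_closed P" and agree: "\<forall>x\<in>P. M $$ x = M' $$ x"
    and pq: "(p,q) \<in> P" "p < n" "q < n"
  shows "(g * M * h) $$ (p,q) = (g * M' * h) $$ (p,q)"
proof -
  have "g $$ (p,a) * M $$ (a,b) * h $$ (b,q) = g $$ (p,a) * M' $$ (a,b) * h $$ (b,q)"
    if ab: "a < n" "b < n" for a b
  proof (cases "a < p \<or> q < b")
    case True
    then show ?thesis using g h ab pq by (auto simp: ut_D)
  next
    case False
    show ?thesis
    proof (cases "a < b")
      case True
      then have "(a,b) \<in> P" using P pq False unfolding down_closed_def by auto
      then show ?thesis using agree by auto
    next
      case False
      then show ?thesis using M M' ab unfolding sup_mat_def by auto
    qed
  qed
  then show ?thesis using assms M M' unfolding sup_mat_def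
    by (simp add: triple_entry del: index_mult_mat) (intro sum.cong refl, auto)
qed

lemma sup_conj:
  fixes g M h :: "'a::field mat"
  assumes g: "g \<in> carrier_mat n n" "upper_triangular g"
    and h: "h \<in> carrier_mat n n" "upper_triangular h"
    and M: "sup_mat n M"
  shows "sup_mat n (g * M * h)"
proof -
  have "(g * M * h) $$ (p,q) = 0" if "q \<le> p" "p < n" for p q
  proof -
    have "g $$ (p,a) * M $$ (a,b) * h $$ (b,q) = 0" if ab: "a < n" "b < n" for a b
    proof (cases "a < p \<or> q < b")
      case True
      then show ?thesis using g h ab \<open>p < n\<close> \<open>q \<le> p\<close> by (auto simp: ut_D)
    next
      case False
      then show ?thesis using M ab \<open>q \<le> p\<close> unfolding sup_mat_def by auto
    qed
    then show ?thesis using assms that M unfolding sup_mat_def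
      by (simp add: triple_entry del: index_mult_mat) (intro sum.neutral ballI, auto)
  qed
  then show ?thesis using assms unfolding sup_mat_def by auto
qed

lemma ut_mult:
  fixes X Y :: "'a::field mat"
  assumes "X \<in> carrier_mat n n" "upper_triangular X" "Y \<in> carrier_mat n n" "upper_triangular Y"
  shows "upper_triangular (X * Y)" "\<And>c. c < n \<Longrightarrow> (X*Y) $$ (c,c) = X $$ (c,c) * Y $$ (c,c)"
proof -
  show "upper_triangular (X * Y)"
  proof
    fix i j assume ij: "j < i" "i < dim_row (X * Y)"
    have i: "i < n" using ij assms by simp
    have "X $$ (i,k) * Y $$ (k,j) = 0" if "k < n" for k
      using assms ij that i by (cases "k < i") (auto simp: ut_D)
    then show "(X * Y) $$ (i,j) = 0" using assms ij i
      by (simp add: mult_entry del: index_mult_mat) (intro sum.neutral ballI, auto)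
  qed
  fix c assume c: "c < n"
  have "(X*Y) $$ (c,c) = (\<Sum>k<n. X $$ (c,k) * Y $$ (k,c))" using assms c by (simp add: mult_entry del: index_mult_mat)
  also have "\<dots> = (\<Sum>k\<in>{c}. X $$ (c,k) * Y $$ (k,c))"
  proof (rule sum.mono_neutral_right)
    show "\<forall>k\<in>{..<n} - {c}. X $$ (c, k) * Y $$ (k, c) = 0"
      using assms c by (auto simp: ut_D dest!: nat_neq_iff[THEN iffD1])
  qed (use c in auto)
  finally show "(X*Y) $$ (c,c) = X $$ (c,c) * Y $$ (c,c)" by simp
qed

lemma ut_inv:
  fixes B Bi :: "'a::field mat"
  assumes B: "B \<in> carrier_mat n n" "upper_triangular B" "\<And>c. c < n \<Longrightarrow> B $$ (c,c) \<noteq> 0"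
    and Bi: "Bi \<in> carrier_mat n n" "Bi * B = 1\<^sub>m n"
  shows "upper_triangular Bi"
proof -
  have "\<forall>i. j < i \<longrightarrow> i < n \<longrightarrow> Bi $$ (i,j) = 0" for j
  proof (induction j rule: less_induct)
    case (less j)
    show ?case
    proof (intro allI impI)
      fix i assume ij: "j < i" "i < n"
      have "0 = (Bi * B) $$ (i,j)" using Bi ij by simp
      also have "\<dots> = (\<Sum>k<n. Bi $$ (i,k) * B $$ (k,j))" by (rule mult_entry) (use B Bi ij in auto)
      also have "\<dots> = (\<Sum>k\<in>{j}. Bi $$ (i,k) * B $$ (k,j))"
      proof (rule sum.mono_neutral_right)
        show "\<forall>k\<in>{..<n} - {j}. Bi $$ (i, k) * B $$ (k, j) = 0"
        proof
          fix k assume k: "k \<in> {..<n} - {j}"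
          show "Bi $$ (i, k) * B $$ (k, j) = 0"
          proof (cases "k < j")
            case True then show ?thesis using less ij by auto
          next
            case False then show ?thesis using B k ij by (auto simp: ut_D)
          qed
        qed
      qed (use ij in auto)
      finally show "Bi $$ (i,j) = 0" using B ij by auto
    qed
  qed
  then show ?thesis using Bi by auto
qed

lemma ut_diag_nz:
  fixes B Bi :: "'a::field mat"
  assumes B: "B \<in> carrier_mat n n" "upper_triangular B" and Bi: "Bi \<in> carrier_mat n n" "B * Bi = 1\<^sub>m n"
    and c: "c < n"
  shows "B $$ (c,c) \<noteq> 0"
proof
  assume "B $$ (c,c) = 0"
  then have "det B = 0" using B c
    by (auto simp: det_upper_triangular[OF B(2) B(1)] prod_list_diag_prod intro!: prod_zero)
  then have "det (B * Bi) = 0" using det_mult[OF B(1) Bi(1)] by simp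
  then show False using Bi by (simp add: det_one)
qed




definition ipair :: "nat \<Rightarrow> 'a::field mat \<Rightarrow> 'a mat \<Rightarrow> bool" where
  "ipair n g gi \<longleftrightarrow> g \<in> carrier_mat n n \<and> gi \<in> carrier_mat n n \<and> g * gi = 1\<^sub>m n \<and> gi * g = 1\<^sub>m n"

lemma inv_unique:
  assumes "ipair n g gi" "g' \<in> carrier_mat n n" "g * g' = 1\<^sub>m n"
  shows "g' = gi"
proof -
  have c: "g \<in> carrier_mat n n" "gi \<in> carrier_mat n n" "gi * g = 1\<^sub>m n" using assms unfolding ipair_def by auto
  have "(gi * g) * g' = gi * (g * g')" by (rule assoc_mult_mat[OF c(2) c(1) assms(2)])
  then have "1\<^sub>m n * g' = gi * 1\<^sub>m n" using c assms by simp
  then show ?thesis using c assms(2) by (simp add: left_mult_one_mat right_mult_one_mat)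
qed

lemma utg_inv:
  fixes g :: "'a::field mat"
  assumes "g \<in> upper_tri_group n"
  shows "\<exists>gi. ipair n g gi"
proof -
  from assms have g: "g \<in> carrier_mat n n" "invertible_mat g" unfolding upper_tri_group_def by auto
  then obtain gi where "inverts_mat g gi" "inverts_mat gi g" unfolding invertible_mat_def by auto
  then have e1: "g * gi = 1\<^sub>m n" and e2: "gi * g = 1\<^sub>m (dim_row gi)" using g unfolding inverts_mat_def by auto
  have c1: "dim_col gi = n" using arg_cong[OF e1, of dim_col] by simp
  have c2: "dim_row gi = n" using arg_cong[OF e2, of dim_col] g by simp
  have "gi \<in> carrier_mat n n" using c1 c2 by auto
  moreover have "gi * g = 1\<^sub>m n" using e2 c2 by simp
  moreover note e1
  ultimately show ?thesis using g unfolding ipair_def by auto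
qed

lemma utg_inv_ut:
  fixes g :: "'a::field mat"
  assumes "g \<in> upper_tri_group n" "ipair n g gi"
  shows "upper_triangular gi"
proof -
  have "\<And>c. c < n \<Longrightarrow> g $$ (c,c) \<noteq> 0"
    using assms ut_diag_nz unfolding upper_tri_group_def ipair_def by blast
  then show ?thesis using assms ut_inv unfolding upper_tri_group_def ipair_def by blast
qed

lemma su_iff: "M \<in> strict_upper_set n \<longleftrightarrow> sup_mat n M"
proof
  assume "M \<in> strict_upper_set n"
  then have M: "M \<in> carrier_mat n n" "upper_triangular M" "\<forall>i<n. M $$ (i,i) = 0"
    unfolding strict_upper_set_def by auto
  have "M $$ (a,b) = 0" if "b \<le> a" "a < n" for a b
  proof (cases "b = a")
    case True then show ?thesis using M that by auto
  next
    case False then show ?thesis using M that by (intro upper_triangularD) auto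
  qed
  then show "sup_mat n M" using M unfolding sup_mat_def by auto
next
  assume "sup_mat n M"
  then show "M \<in> strict_upper_set n" unfolding strict_upper_set_def sup_mat_def
    by (auto intro!: upper_triangularI)
qed

lemma smw_D:
  fixes M :: "'a::field mat"
  assumes "similar_mat_wit C M g g'" "M \<in> carrier_mat n n"
  shows "ipair n g g' \<and> C = g * M * g' \<and> C \<in> carrier_mat n n"
proof -
  let ?m = "dim_row C"
  have h: "{C,M,g,g'} \<subseteq> carrier_mat ?m ?m \<and> g * g' = 1\<^sub>m ?m \<and> g' * g = 1\<^sub>m ?m \<and> C = g * M * g'"
    using assms(1) unfolding similar_mat_wit_def Let_def .
  note h1 = h[THEN conjunct1] and h2 = h[THEN conjunct2, THEN conjunct1]
    and h3 = h[THEN conjunct2, THEN conjunct2, THEN conjunct1]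
    and h4 = h[THEN conjunct2, THEN conjunct2, THEN conjunct2]
  have s: "C \<in> carrier_mat ?m ?m" "M \<in> carrier_mat ?m ?m" "g \<in> carrier_mat ?m ?m" "g' \<in> carrier_mat ?m ?m"
    using h1 by (simp_all only: insert_subset)
  have m: "?m = n" using s(2) assms(2) unfolding carrier_mat_def by simp
  show ?thesis unfolding ipair_def using s h2 h3 h4 unfolding m by (intro conjI)
qed

lemma smw_I:
  fixes M :: "'a::field mat"
  assumes "ipair n g g'" "M \<in> carrier_mat n n"
  shows "similar_mat_wit (g * M * g') M g g'"
proof -
  have c: "g \<in> carrier_mat n n" "g' \<in> carrier_mat n n" "g * g' = 1\<^sub>m n" "g' * g = 1\<^sub>m n"
    using assms(1) unfolding ipair_def by auto
  have d: "dim_row (g * M * g') = n" using c by simp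
  have "g * M * g' \<in> carrier_mat n n" using c assms(2) by (auto intro!: mult_carrier_mat)
  then show ?thesis unfolding similar_mat_wit_def Let_def d using c assms(2) by blast
qed

definition prec :: "nat \<times> nat \<Rightarrow> nat \<times> nat \<Rightarrow> bool" where
  "prec x y \<longleftrightarrow> fst y < fst x \<or> (fst x = fst y \<and> snd x < snd y)"

lemma prec_trans: "prec x y \<Longrightarrow> prec y z \<Longrightarrow> prec x z"
  unfolding prec_def by auto

lemma prec_irrefl: "\<not> prec x x" unfolding prec_def by auto
lemma prec_asym: "prec x y \<Longrightarrow> \<not> prec y x" unfolding prec_def by auto

definition gen :: "nat \<Rightarrow> nat \<Rightarrow> (nat \<times> nat) list" where
  "gen n m = concat (map (\<lambda>i. map (\<lambda>j. (i,j)) [Suc i..<n]) (rev [0..<m]))"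

lemma gen_Suc: "gen n (Suc m) = map (\<lambda>j. (m,j)) [Suc m..<n] @ gen n m"
  unfolding gen_def by simp

lemma gen_set: "set (gen n m) = {(i,j). i < m \<and> i < j \<and> j < n}"
  by (induction m) (auto simp: gen_Suc, auto simp: gen_def)

lemma gen_sorted: "sorted_wrt prec (gen n m)"
proof (induction m)
  case 0 then show ?case by (simp add: gen_def)
next
  case (Suc m)
  have "sorted_wrt prec (map (\<lambda>j. (m,j)) [Suc m..<n])"
    by (simp add: sorted_wrt_map prec_def sorted_wrt_upt[unfolded sorted_wrt_iff_nth_less] sorted_wrt_iff_nth_less)
  moreover have "\<forall>x\<in>set (map (\<lambda>j. (m,j)) [Suc m..<n]). \<forall>y\<in>set (gen n m). prec x y"
    by (auto simp: gen_set prec_def)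
  ultimately show ?case using Suc by (simp only: gen_Suc sorted_wrt_append)
qed

lemma pos_gen: "belitskii_positions n = gen n (n - 1)"
  unfolding belitskii_positions_def gen_def by simp

lemma pos_set: "set (belitskii_positions n) = {(i,j). i < j \<and> j < n}"
  unfolding pos_gen gen_set by auto

lemma pos_sorted: "sorted_wrt prec (belitskii_positions n)"
  unfolding pos_gen by (rule gen_sorted)

lemma take_char:
  assumes s: "sorted_wrt prec xs" and k: "k < length xs"
  shows "set (take k xs) = {x \<in> set xs. prec x (xs ! k)}"
proof
  show "set (take k xs) \<subseteq> {x \<in> set xs. prec x (xs ! k)}"
  proof
    fix x assume "x \<in> set (take k xs)"
    then obtain i where i: "i < k" "x = xs ! i" using k by (auto simp: in_set_conv_nth)
    then show "x \<in> {x \<in> set xs. prec x (xs ! k)}"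
      using s k by (auto simp: sorted_wrt_iff_nth_less)
  qed
  show "{x \<in> set xs. prec x (xs ! k)} \<subseteq> set (take k xs)"
  proof
    fix x assume x: "x \<in> {x \<in> set xs. prec x (xs ! k)}"
    then obtain i where i: "i < length xs" "x = xs ! i" by (auto simp: in_set_conv_nth)
    have "i < k"
    proof (rule ccontr)
      assume "\<not> i < k"
      then have "i = k \<or> k < i" by auto
      then show False
      proof
        assume "i = k" then show False using x i prec_irrefl by auto
      next
        assume "k < i"
        then have "prec (xs ! k) (xs ! i)" using s i by (auto simp: sorted_wrt_iff_nth_less)
        then show False using x i prec_asym by auto
      qed
    qed
    then show "x \<in> set (take k xs)" using i by (auto simp: in_set_conv_nth)
  qed
qed

locale brun =
  fixes n :: nat and As :: "nat \<Rightarrow> 'a::field mat"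
  assumes A0: "As 0 \<in> strict_upper_set n"
  and steps: "\<And>k. k < length (belitskii_positions n) \<Longrightarrow> belitskii_step n As k"
begin

abbreviation "pos \<equiv> belitskii_positions n"
abbreviation "N \<equiv> length pos"
abbreviation "F \<equiv> As N"
abbreviation "G \<equiv> belitskii_group n As"
definition Pk :: "nat \<Rightarrow> (nat \<times> nat) set" where "Pk k = set (take k pos)"

lemma Pk_char0: "k < N \<Longrightarrow> Pk k = {x \<in> set pos. prec x (pos ! k)}"
  unfolding Pk_def by (rule take_char[OF pos_sorted])

lemma Pk_char: "k < N \<Longrightarrow> Pk k = {(i,j). i < j \<and> j < n \<and> prec (i,j) (pos ! k)}"
proof -
  assume k: "k < N"
  have "Pk k = {x \<in> set pos. prec x (pos ! k)}" unfolding Pk_def by (rule take_char[OF pos_sorted k])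
  also have "\<dots> = {(i,j). i < j \<and> j < n \<and> prec (i,j) (pos ! k)}" unfolding pos_set by blast
  finally show ?thesis .
qed

lemma Pk_N: "Pk N = {(i,j). i < j \<and> j < n}"
  unfolding Pk_def take_all[OF order_refl] by (rule pos_set)

lemma Pk_sub: "Pk k \<subseteq> {(i,j). i < j \<and> j < n}"
  unfolding Pk_def pos_set[symmetric] by (rule set_take_subset)

lemma Pk_mono: "j \<le> k \<Longrightarrow> Pk j \<subseteq> Pk k"
  unfolding Pk_def by (rule set_take_subset_set_take)

lemma pos_in: "k < N \<Longrightarrow> pos ! k \<in> Pk (Suc k)"
  unfolding Pk_def by (simp only: take_Suc_conv_app_nth set_append) simp

lemma pos_notin: "k < N \<Longrightarrow> pos ! k \<notin> Pk k"
  by (simp add: Pk_char0 prec_irrefl)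

lemma pos_lt: "k < N \<Longrightarrow> pos ! k = (p,q) \<Longrightarrow> p < q \<and> q < n"
proof -
  assume "k < N" "pos ! k = (p,q)"
  then have "(p,q) \<in> set pos" using nth_mem by metis
  then show ?thesis unfolding pos_set by simp
qed

lemma Pk_down: "k \<le> N \<Longrightarrow> down_closed (Pk k)"
proof (cases "k = N")
  case True then show ?thesis unfolding True Pk_N down_closed_def by auto
next
  case False
  assume "k \<le> N"
  then have k: "k < N" using False by auto
  show ?thesis unfolding down_closed_def
  proof (intro allI impI)
    fix i j i' j' assume h: "(i,j) \<in> Pk k" "i \<le> i'" "j' \<le> j" "i' < j'"
    then have a: "i < j" "j < n" "prec (i,j) (pos ! k)" using Pk_char[OF k] by auto
    have "prec (i',j') (pos ! k)"
    proof (cases "(i',j') = (i,j)")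
      case True then show ?thesis using a by simp
    next
      case False
      then have "prec (i',j') (i,j)" using h unfolding prec_def by auto
      then show ?thesis using a prec_trans by blast
    qed
    then show "(i',j') \<in> Pk k" using Pk_char[OF k] h a by auto
  qed
qed

lemma G_sub: "G k \<subseteq> upper_tri_group n"
  by (induction k) auto

lemma conj_facts:
  assumes "G_similar (G k) M C" "sup_mat n M"
  shows "sup_mat n C \<and> (\<exists>g\<in>G k. \<exists>g'. ipair n g g' \<and> C = g * M * g')"
proof -
  obtain g g' where g: "g \<in> G k" "similar_mat_wit C M g g'" using assms(1) unfolding G_similar_def by auto
  have M: "M \<in> carrier_mat n n" using assms(2) unfolding sup_mat_def by auto
  have gg: "ipair n g g'" "C = g * M * g'" using smw_D[OF g(2) M] by auto
  have gu: "g \<in> upper_tri_group n" using g G_sub by auto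
  have "upper_triangular g'" using utg_inv_ut[OF gu gg(1)] .
  then have "sup_mat n C" unfolding gg(2) using gu gg(1) assms(2)
    by (intro sup_conj) (auto simp: upper_tri_group_def ipair_def)
  then show ?thesis using g gg by auto
qed

lemma step_cases:
  assumes "k < N"
  shows "As (Suc k) = As k \<or> G_similar (G k) (As k) (As (Suc k))"
  using steps[OF assms] unfolding belitskii_step_def Let_def by (auto split: if_splits)

lemma sup_As: "k \<le> N \<Longrightarrow> sup_mat n (As k)"
proof (induction k)
  case 0 then show ?case using A0 su_iff by auto
next
  case (Suc k)
  then have k: "k < N" and IH: "sup_mat n (As k)" by auto
  from step_cases[OF k] show ?case
  proof
    assume "As (Suc k) = As k" then show ?thesis using IH by simp
  next
    assume "G_similar (G k) (As k) (As (Suc k))"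
    then show ?thesis using conj_facts IH by blast
  qed
qed

lemma As_carrier: "k \<le> N \<Longrightarrow> As k \<in> carrier_mat n n"
  using sup_As unfolding sup_mat_def by auto

lemma agree_step:
  assumes k: "k < N"
  shows "\<forall>x\<in>Pk k. As (Suc k) $$ x = As k $$ x"
proof (cases "As (Suc k) = As k")
  case True then show ?thesis by simp
next
  case False
  then have "G_similar (G k) (As k) (As (Suc k))" using step_cases[OF k] by auto
  then obtain g g' where g: "g \<in> G k" "similar_mat_wit (As (Suc k)) (As k) g g'"
    unfolding G_similar_def by auto
  show ?thesis
  proof (cases k)
    case 0 then show ?thesis by (simp add: Pk_def)
  next
    case (Suc k0)
    have "g \<in> G (Suc k0)" using g Suc by simp
    then have "\<forall>g' C. similar_mat_wit C (As (Suc k0)) g g' \<longrightarrow>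
        (\<forall>p \<in> set (take (Suc k0) pos). C $$ p = As (Suc k0) $$ p)" by simp
    then show ?thesis using g(2) Suc unfolding Pk_def by auto
  qed
qed

lemma agree_gen:
  "m \<le> m' \<Longrightarrow> m' \<le> N \<Longrightarrow> \<forall>x\<in>Pk m. As m' $$ x = As m $$ x"
proof (induction m')
  case 0 then show ?case by simp
next
  case (Suc m')
  show ?case
  proof (cases "m = Suc m'")
    case True then show ?thesis by simp
  next
    case False
    then have a: "m \<le> m'" "m' < N" using Suc by auto
    have "\<forall>x\<in>Pk m. As m' $$ x = As m $$ x" using Suc.IH a by auto
    moreover have "\<forall>x\<in>Pk m. As (Suc m') $$ x = As m' $$ x"
      using agree_step[OF a(2)] Pk_mono[OF a(1)] by blast
    ultimately show ?thesis by simp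
  qed
qed

lemma agree_F: "m \<le> N \<Longrightarrow> \<forall>x\<in>Pk m. F $$ x = As m $$ x"
  using agree_gen by auto

lemma F_at: "k < N \<Longrightarrow> F $$ (pos ! k) = As (Suc k) $$ (pos ! k)"
  using agree_F[of "Suc k"] pos_in by auto

lemma G_char:
  assumes "k \<le> N" "g \<in> upper_tri_group n" "ipair n g gi"
  shows "g \<in> G k \<longleftrightarrow> (\<forall>x\<in>Pk k. (g * F * gi) $$ x = F $$ x)"
  using assms(1)
proof (induction k)
  case 0 then show ?case using assms by (simp add: Pk_def)
next
  case (Suc k)
  have gc: "g \<in> carrier_mat n n" "upper_triangular g" using assms unfolding upper_tri_group_def by auto
  have gic: "gi \<in> carrier_mat n n" "upper_triangular gi" using assms utg_inv_ut unfolding ipair_def by auto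
  let ?M = "As (Suc k)"
  have Mc: "?M \<in> carrier_mat n n" using As_carrier Suc by auto
  have "(\<forall>g' C. similar_mat_wit C ?M g g' \<longrightarrow> (\<forall>p \<in> set (take (Suc k) pos). C $$ p = ?M $$ p))
     \<longleftrightarrow> (\<forall>x\<in>Pk (Suc k). (g * ?M * gi) $$ x = ?M $$ x)" (is "?L \<longleftrightarrow> ?R")
  proof
    assume ?L then show ?R using smw_I[OF assms(3) Mc] unfolding Pk_def by blast
  next
    assume R: ?R
    show ?L
    proof (intro allI impI)
      fix g' C assume "similar_mat_wit C ?M g g'"
      then have "ipair n g g'" "C = g * ?M * g'" using smw_D[OF _ Mc] by auto
      moreover then have "g' = gi" using inv_unique[OF assms(3)] unfolding ipair_def by auto
      ultimately show "\<forall>p \<in> set (take (Suc k) pos). C $$ p = ?M $$ p" using R unfolding Pk_def by auto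
    qed
  qed
  also have "\<dots> \<longleftrightarrow> (\<forall>x\<in>Pk (Suc k). (g * F * gi) $$ x = F $$ x)"
  proof -
    have ag: "\<forall>x\<in>Pk (Suc k). ?M $$ x = F $$ x" using agree_F[OF Suc.prems] by auto
    have "(g * ?M * gi) $$ x = (g * F * gi) $$ x" if x: "x \<in> Pk (Suc k)" for x
    proof -
      obtain p q where pq: "x = (p,q)" by (cases x)
      have "p < q" "q < n" using x Pk_sub pq by auto
      then show ?thesis unfolding pq
        using lemmaL[OF gc gic sup_As sup_As Pk_down[OF Suc.prems] ag] x pq Suc.prems by auto
    qed
    then show ?thesis using ag by auto
  qed
  finally have e: "g \<in> G (Suc k) \<longleftrightarrow> g \<in> G k \<and> (\<forall>x\<in>Pk (Suc k). (g * F * gi) $$ x = F $$ x)"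
    by simp
  show ?case unfolding e using Suc.IH Suc.prems Pk_mono[of k "Suc k"] by auto
qed

end

lemma sum_single:
  fixes f :: "nat \<Rightarrow> 'a::comm_monoid_add"
  assumes "i < n" "\<And>k. k < n \<Longrightarrow> k \<noteq> i \<Longrightarrow> f k = 0"
  shows "(\<Sum>k<n. f k) = f i"
proof -
  have "(\<Sum>k<n. f k) = (\<Sum>k\<in>{i}. f k)"
    by (rule sum.mono_neutral_right) (use assms in auto)
  then show ?thesis by simp
qed

definition dm :: "nat \<Rightarrow> (nat \<Rightarrow> 'a::field) \<Rightarrow> 'a mat" where
  "dm n d = mat n n (\<lambda>(i,j). if i = j then d i else 0)"

lemma dm_carrier: "dm n d \<in> carrier_mat n n" unfolding dm_def by auto

lemma dm_ut: "upper_triangular (dm n d)" unfolding dm_def by auto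

lemma dm_left:
  assumes "M \<in> carrier_mat n n" "i < n" "j < n"
  shows "(dm n d * M) $$ (i,j) = d i * M $$ (i,j)"
proof -
  have "(dm n d * M) $$ (i,j) = (\<Sum>k<n. dm n d $$ (i,k) * M $$ (k,j))"
    by (rule mult_entry) (use assms dm_carrier in auto)
  also have "\<dots> = dm n d $$ (i,i) * M $$ (i,j)"
    by (rule sum_single) (use assms in \<open>auto simp: dm_def\<close>)
  finally show ?thesis using assms by (simp add: dm_def)
qed

lemma dm_right:
  assumes "M \<in> carrier_mat n n" "i < n" "j < n"
  shows "(M * dm n d) $$ (i,j) = M $$ (i,j) * d j"
proof -
  have "(M * dm n d) $$ (i,j) = (\<Sum>k<n. M $$ (i,k) * dm n d $$ (k,j))"
    by (rule mult_entry) (use assms dm_carrier in auto)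
  also have "\<dots> = M $$ (i,j) * dm n d $$ (j,j)"
    by (rule sum_single) (use assms in \<open>auto simp: dm_def\<close>)
  finally show ?thesis using assms by (simp add: dm_def)
qed

lemma dm_ipair:
  assumes "\<And>i. i < n \<Longrightarrow> d i * e i = 1"
  shows "ipair n (dm n d) (dm n e)"
proof -
  have "dm n d * dm n e = 1\<^sub>m n"
    by (rule eq_matI) (use assms in \<open>auto simp: dm_left dm_carrier, auto simp: dm_def\<close>)
  moreover have "dm n e * dm n d = 1\<^sub>m n"
    by (rule eq_matI) (use assms in \<open>auto simp: dm_left dm_carrier, auto simp: dm_def mult.commute\<close>)
  ultimately show ?thesis unfolding ipair_def using dm_carrier by auto
qed

definition em :: "nat \<Rightarrow> nat \<Rightarrow> nat \<Rightarrow> 'a::field \<Rightarrow> 'a mat" where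
  "em n p r s = mat n n (\<lambda>(i,j). (if i = j then 1 else 0) + (if i = p \<and> j = r then s else 0))"

lemma em_carrier: "em n p r s \<in> carrier_mat n n" unfolding em_def by auto

lemma em_ut: "p < r \<Longrightarrow> upper_triangular (em n p r s)"
proof (intro upper_triangularI)
  fix i j assume "p < r" "j < i" "i < dim_row (em n p r s)"
  then show "em n p r s $$ (i, j) = 0" unfolding em_def by auto
qed

lemma em_left:
  assumes "M \<in> carrier_mat n n" "i < n" "j < n" "p < n" "r < n"
  shows "(em n p r s * M) $$ (i,j) = M $$ (i,j) + (if i = p then s * M $$ (r,j) else 0)"
proof -
  have "(em n p r s * M) $$ (i,j) = (\<Sum>k<n. em n p r s $$ (i,k) * M $$ (k,j))"
    by (rule mult_entry) (use assms em_carrier in auto)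
  also have "\<dots> = (\<Sum>k<n. (if i = k then M $$ (k,j) else 0) + (if i = p \<and> k = r then s * M $$ (k,j) else 0))"
    by (rule sum.cong) (use assms in \<open>auto simp: em_def distrib_right\<close>)
  also have "\<dots> = (\<Sum>k<n. (if i = k then M $$ (k,j) else 0)) + (\<Sum>k<n. (if i = p \<and> k = r then s * M $$ (k,j) else 0))"
    by (rule sum.distrib)
  also have "\<dots> = M $$ (i,j) + (if i = p then s * M $$ (r,j) else 0)"
    using assms by (simp add: sum.delta' lessThan_def)
  finally show ?thesis .
qed

lemma em_right:
  assumes "M \<in> carrier_mat n n" "i < n" "j < n" "p < n" "r < n"
  shows "(M * em n p r s) $$ (i,j) = M $$ (i,j) + (if j = r then M $$ (i,p) * s else 0)"
proof -
  have "(M * em n p r s) $$ (i,j) = (\<Sum>k<n. M $$ (i,k) * em n p r s $$ (k,j))"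
    by (rule mult_entry) (use assms em_carrier in auto)
  also have "\<dots> = (\<Sum>k<n. (if k = j then M $$ (i,k) else 0) + (if k = p \<and> j = r then M $$ (i,k) * s else 0))"
    by (rule sum.cong) (use assms in \<open>auto simp: em_def distrib_left\<close>)
  also have "\<dots> = (\<Sum>k<n. (if k = j then M $$ (i,k) else 0)) + (\<Sum>k<n. (if k = p \<and> j = r then M $$ (i,k) * s else 0))"
    by (rule sum.distrib)
  also have "\<dots> = M $$ (i,j) + (if j = r then M $$ (i,p) * s else 0)"
    using assms by (simp add: sum.delta lessThan_def)
  finally show ?thesis .
qed

lemma em_ipair:
  assumes "p \<noteq> r" "p < n" "r < n"
  shows "ipair n (em n p r s) (em n p r (- s))"
proof -
  have "em n p r s' * em n p r (- s') = 1\<^sub>m n" for s' :: 'a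
  proof (rule eq_matI)
    fix i j assume ij: "i < dim_row (1\<^sub>m n)" "j < dim_col (1\<^sub>m n)"
    then show "(em n p r s' * em n p r (- s')) $$ (i, j) = 1\<^sub>m n $$ (i, j)"
      using assms by (auto simp: em_left em_carrier, auto simp: em_def)
  qed (auto simp: em_def)
  from this[of s] this[of "-s"] show ?thesis unfolding ipair_def using em_carrier by auto
qed

lemma ipair_inv: "ipair n g gi \<Longrightarrow> invertible_mat g"
  unfolding ipair_def invertible_mat_def inverts_mat_def square_mat.simps
  by (metis carrier_matD(1) carrier_matD(2))

lemma ipair_mult:
  assumes "ipair n a ai" "ipair n b bi"
  shows "ipair n (a * b) (bi * ai)"
proof -
  have c: "a \<in> carrier_mat n n" "ai \<in> carrier_mat n n" "b \<in> carrier_mat n n" "bi \<in> carrier_mat n n"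
    "a * ai = 1\<^sub>m n" "ai * a = 1\<^sub>m n" "b * bi = 1\<^sub>m n" "bi * b = 1\<^sub>m n"
    using assms unfolding ipair_def by auto
  have e1: "(a * b) * (bi * ai) = a * (b * (bi * ai))" by (rule assoc_mult_mat[OF c(1) c(3)]) (use c in auto)
  have e2: "(b * bi) * ai = b * (bi * ai)" by (rule assoc_mult_mat[OF c(3) c(4) c(2)])
  have 1: "(a * b) * (bi * ai) = 1\<^sub>m n" unfolding e1 e2[symmetric] using c by simp
  have e3: "(bi * ai) * (a * b) = bi * (ai * (a * b))" by (rule assoc_mult_mat[OF c(4) c(2)]) (use c in auto)
  have e4: "(ai * a) * b = ai * (a * b)" by (rule assoc_mult_mat[OF c(2) c(1) c(3)])
  have 2: "(bi * ai) * (a * b) = 1\<^sub>m n" unfolding e3 e4[symmetric] using c by simp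
  show ?thesis unfolding ipair_def using 1 2 c by auto
qed

lemma utg_I:
  assumes "ipair n g gi" "upper_triangular g"
  shows "g \<in> upper_tri_group n"
  using assms ipair_inv unfolding upper_tri_group_def ipair_def by auto

lemma dm_conj:
  assumes "M \<in> carrier_mat n n" "i < n" "j < n"
  shows "(dm n d * M * dm n e) $$ (i,j) = d i * M $$ (i,j) * e j"
proof -
  have c: "dm n d * M \<in> carrier_mat n n" by (rule mult_carrier_mat[OF dm_carrier assms(1)])
  show ?thesis using dm_right[OF c assms(2,3)] dm_left[OF assms] by simp
qed

lemma em_conj:
  assumes "M \<in> carrier_mat n n" "i < n" "j < n" "p < n" "r < n"
  shows "(em n p r s * M * em n p r s') $$ (i,j) = M $$ (i,j) + (if i = p then s * M $$ (r,j) else 0)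
     + (if j = r then (M $$ (i,p) + (if i = p then s * M $$ (r,p) else 0)) * s' else 0)"
proof -
  have c: "em n p r s * M \<in> carrier_mat n n" by (rule mult_carrier_mat[OF em_carrier assms(1)])
  show ?thesis using em_right[OF c assms(2,3,4,5)] em_left[OF assms] em_left[OF assms(1,2) assms(4) assms(4,5)] by simp
qed

lemma assoc5:
  fixes a b c d e :: "'a::field mat"
  assumes "a \<in> carrier_mat n n" "b \<in> carrier_mat n n" "c \<in> carrier_mat n n" "d \<in> carrier_mat n n" "e \<in> carrier_mat n n"
  shows "(a * b) * c * (d * e) = a * (b * c * d) * e"
  using assms by (simp add: assoc_mult_mat[of _ n n _ n _ n] mult_carrier_mat)

context brun
begin

lemma Pk_mem: "k < N \<Longrightarrow> pos ! k = (p,q) \<Longrightarrow> (i,j) \<in> Pk k \<longleftrightarrow> i < j \<and> j < n \<and> (p < i \<or> (i = p \<and> j < q))"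
  by (simp add: Pk_char prec_def)

lemma F_sup: "sup_mat n F" using sup_As by simp

lemma F_carrier: "F \<in> carrier_mat n n" using F_sup unfolding sup_mat_def by auto

lemma one_in_G: "k \<le> N \<Longrightarrow> 1\<^sub>m n \<in> G k"
proof -
  assume k: "k \<le> N"
  have ip: "ipair n (1\<^sub>m n) (1\<^sub>m n)" unfolding ipair_def by auto
  have u: "1\<^sub>m n \<in> upper_tri_group n" by (rule utg_I[OF ip]) simp
  show ?thesis using G_char[OF k u ip] F_carrier by simp
qed

lemma As_in_vals: "k \<le> N \<Longrightarrow> G_similar (G k) (As k) (As k)"
proof -
  assume k: "k \<le> N"
  have ip: "ipair n (1\<^sub>m n) (1\<^sub>m n)" unfolding ipair_def by auto
  have "similar_mat_wit (1\<^sub>m n * As k * 1\<^sub>m n) (As k) (1\<^sub>m n) (1\<^sub>m n)"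
    by (rule smw_I[OF ip As_carrier[OF k]])
  then have "similar_mat_wit (As k) (As k) (1\<^sub>m n) (1\<^sub>m n)" using As_carrier[OF k] by simp
  then show ?thesis unfolding G_similar_def using one_in_G[OF k] by blast
qed

lemma scale_vals:
  assumes k: "k < N" "pos ! k = (p,q)" and z: "\<forall>c<q. F $$ (p,c) = 0" and t: "t \<noteq> 0"
    and C: "G_similar (G k) (As k) C"
  shows "\<exists>C'. G_similar (G k) (As k) C' \<and> C' $$ (p,q) = t * C $$ (p,q)"
proof -
  have pq: "p < q" "q < n" using pos_lt[OF k] by auto
  have Ac: "As k \<in> carrier_mat n n" using As_carrier k by auto
  obtain g g' where g: "g \<in> G k" "similar_mat_wit C (As k) g g'" using C unfolding G_similar_def by auto
  have gg: "ipair n g g'" "C = g * As k * g'" using smw_D[OF g(2) Ac] by auto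
  have gu: "g \<in> upper_tri_group n" using g G_sub by auto
  have gc: "g \<in> carrier_mat n n" "g' \<in> carrier_mat n n" using gg unfolding ipair_def by auto
  define d where "d = (\<lambda>i::nat. if i = p then t else 1)"
  define e where "e = (\<lambda>i::nat. if i = p then inverse t else 1)"
  let ?D = "dm n d" and ?Di = "dm n e"
  have Dp: "ipair n ?D ?Di" by (rule dm_ipair) (use t in \<open>auto simp: d_def e_def\<close>)
  have hp: "ipair n (?D * g) (g' * ?Di)" by (rule ipair_mult[OF Dp gg(1)])
  have hut: "upper_triangular (?D * g)"
    using ut_mult(1)[OF dm_carrier dm_ut gc(1)] gu unfolding upper_tri_group_def by auto
  have hu: "?D * g \<in> upper_tri_group n" by (rule utg_I[OF hp hut])
  have gF: "\<forall>x\<in>Pk k. (g * F * g') $$ x = F $$ x" using G_char[OF less_imp_le[OF k(1)] gu gg(1)] g(1) by blast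
  have "\<forall>x\<in>Pk k. ((?D * g) * F * (g' * ?Di)) $$ x = F $$ x"
  proof
    fix x assume x: "x \<in> Pk k"
    obtain i j where ij: "x = (i,j)" by (cases x)
    have ij2: "i < j" "j < n" "p < i \<or> (i = p \<and> j < q)" using x Pk_mem[OF k] ij by auto
    have eq: "(?D * g) * F * (g' * ?Di) = ?D * (g * F * g') * ?Di"
      by (rule assoc5) (use gc F_carrier dm_carrier in auto)
    have Mc: "g * F * g' \<in> carrier_mat n n" using gc F_carrier by auto
    have "((?D * g) * F * (g' * ?Di)) $$ (i,j) = d i * (g * F * g') $$ (i,j) * e j"
      unfolding eq using dm_conj[OF Mc] ij2 by auto
    also have "\<dots> = d i * F $$ (i,j) * e j" using gF x ij by auto
    also have "\<dots> = F $$ (i,j)"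
    proof (cases "i = p")
      case True
      then show ?thesis using z ij2 by auto
    next
      case False
      then show ?thesis using ij2 by (auto simp: d_def e_def)
    qed
    finally show "((?D * g) * F * (g' * ?Di)) $$ x = F $$ x" using ij by simp
  qed
  then have hG: "?D * g \<in> G k" using G_char[OF _ hu hp] k by auto
  define C' where "C' = (?D * g) * As k * (g' * ?Di)"
  have "similar_mat_wit C' (As k) (?D * g) (g' * ?Di)" unfolding C'_def by (rule smw_I[OF hp Ac])
  then have "G_similar (G k) (As k) C'" unfolding G_similar_def using hG by blast
  moreover have "C' $$ (p,q) = t * C $$ (p,q)"
  proof -
    have eq: "C' = ?D * C * ?Di" unfolding C'_def gg(2)
      by (rule assoc5) (use gc Ac dm_carrier in auto)
    have Cc: "C \<in> carrier_mat n n" using gg gc Ac by auto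
    show ?thesis unfolding eq using dm_conj[OF Cc] pq by (auto simp: d_def e_def)
  qed
  ultimately show ?thesis by blast
qed

lemma step_pq:
  assumes k: "k < N" "pos ! k = (p,q)"
  defines "vals \<equiv> {C $$ (p,q) | C. G_similar (G k) (As k) C}"
  shows "if vals = {0} \<or> vals = UNIV then G_similar (G k) (As k) (As (Suc k)) \<and> As (Suc k) $$ (p,q) = 0
     else if vals = UNIV - {0} then G_similar (G k) (As k) (As (Suc k)) \<and> As (Suc k) $$ (p,q) = 1
     else As (Suc k) = As k"
  using steps[OF k(1)] unfolding belitskii_step_def Let_def k(2) vals_def .

lemma claim1:
  assumes k: "k < N" "pos ! k = (p,q)" and z: "\<forall>c<q. F $$ (p,c) = 0" and nz: "F $$ (p,q) \<noteq> 0"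
  shows "F $$ (p,q) = 1"
proof -
  define vals where "vals \<equiv> {C $$ (p,q) | C. G_similar (G k) (As k) C}"
  have st: "if vals = {0} \<or> vals = UNIV then G_similar (G k) (As k) (As (Suc k)) \<and> As (Suc k) $$ (p,q) = 0
     else if vals = UNIV - {0} then G_similar (G k) (As k) (As (Suc k)) \<and> As (Suc k) $$ (p,q) = 1
     else As (Suc k) = As k" using step_pq[OF k] unfolding vals_def .
  have Fe: "F $$ (p,q) = As (Suc k) $$ (p,q)" using F_at[OF k(1)] k(2) by simp
  show ?thesis
  proof (cases "vals = {0} \<or> vals = UNIV")
    case True then show ?thesis using st Fe nz by simp
  next
    case c1: False
    show ?thesis
    proof (cases "vals = UNIV - {0}")
      case True then show ?thesis using st Fe c1 by simp
    next
      case c2: False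
      then have eq: "As (Suc k) = As k" using st c1 by simp
      define a where "a = As k $$ (p,q)"
      have a0: "a \<noteq> 0" using Fe eq nz a_def by simp
      have ain: "a \<in> vals" unfolding vals_def a_def using As_in_vals[of k] k by auto
      have allnz: "y \<in> vals" if "y \<noteq> 0" for y
      proof -
        have t: "y / a \<noteq> 0" using that a0 by simp
        obtain C' where C': "G_similar (G k) (As k) C'" "C' $$ (p,q) = (y / a) * As k $$ (p,q)"
          using scale_vals[OF k z t As_in_vals[OF less_imp_le[OF k(1)]]] by blast
        have "C' $$ (p,q) = y" using C'(2) a0 unfolding a_def[symmetric] by simp
        then show ?thesis unfolding vals_def using C'(1) by blast
      qed
      show ?thesis
      proof (cases "0 \<in> vals")
        case True
        have "y \<in> vals" for y using True allnz by (cases "y = 0") auto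
        then have "vals = UNIV" by auto
        then show ?thesis using c1 by simp
      next
        case False
        have "vals = UNIV - {0}"
        proof
          show "vals \<subseteq> UNIV - {0}" using False by blast
          show "UNIV - {0} \<subseteq> vals" using allnz by blast
        qed
        then show ?thesis using c2 by simp
      qed
    qed
  qed
qed

lemma claim2:
  assumes k: "k < N" "pos ! k = (p,q)" and pr: "p < r" "r < n"
    and zp: "\<forall>c<q. F $$ (p,c) = 0" and zr: "\<forall>c<q. F $$ (r,c) = 0" and nz: "F $$ (r,q) \<noteq> 0"
  shows "F $$ (p,q) = 0"
proof -
  define vals where "vals \<equiv> {C $$ (p,q) | C. G_similar (G k) (As k) C}"
  have st: "if vals = {0} \<or> vals = UNIV then G_similar (G k) (As k) (As (Suc k)) \<and> As (Suc k) $$ (p,q) = 0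
     else if vals = UNIV - {0} then G_similar (G k) (As k) (As (Suc k)) \<and> As (Suc k) $$ (p,q) = 1
     else As (Suc k) = As k" using step_pq[OF k] unfolding vals_def .
  have Fe: "F $$ (p,q) = As (Suc k) $$ (p,q)" using F_at[OF k(1)] k(2) by simp
  have pq: "p < q" "q < n" using pos_lt[OF k] by auto
  have Fs: "\<And>a b. b \<le> a \<Longrightarrow> a < n \<Longrightarrow> F $$ (a,b) = 0" using F_sup unfolding sup_mat_def by auto
  have rq: "r < q" using nz Fs[of q r] pr(2) by (metis not_less)
  have Ac: "As k \<in> carrier_mat n n" using As_carrier k by auto
  have rqP: "(r,q) \<in> Pk k" using Pk_mem[OF k] pr rq pq by auto
  have Ark: "As k $$ (r,q) = F $$ (r,q)" using agree_F[of k] k rqP by auto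
  have "x \<in> vals" for x
  proof -
    define s where "s = (x - As k $$ (p,q)) / F $$ (r,q)"
    let ?E = "em n p r s" and ?Ei = "em n p r (- s)"
    have ip: "ipair n ?E ?Ei" by (rule em_ipair) (use pr in auto)
    have Eu: "?E \<in> upper_tri_group n" by (rule utg_I[OF ip em_ut[OF pr(1)]])
    have "\<forall>x\<in>Pk k. (?E * F * ?Ei) $$ x = F $$ x"
    proof
      fix y assume y: "y \<in> Pk k"
      obtain i j where ij: "y = (i,j)" by (cases y)
      have ij2: "i < j" "j < n" "p < i \<or> (i = p \<and> j < q)" using y Pk_mem[OF k] ij by auto
      have "(?E * F * ?Ei) $$ (i,j) = F $$ (i,j) + (if i = p then s * F $$ (r,j) else 0)
         + (if j = r then (F $$ (i,p) + (if i = p then s * F $$ (r,p) else 0)) * (- s) else 0)"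
        by (rule em_conj) (use F_carrier ij2 pr pq in auto)
      also have "\<dots> = F $$ (i,j)"
      proof -
        have "(if i = p then s * F $$ (r,j) else 0) = 0" using zr ij2 by auto
        moreover have "F $$ (i,p) = 0" using Fs ij2 pq by auto
        moreover have "F $$ (r,p) = 0" using Fs pr by auto
        ultimately show ?thesis by simp
      qed
      finally show "(?E * F * ?Ei) $$ y = F $$ y" using ij by simp
    qed
    then have EG: "?E \<in> G k" using G_char[OF _ Eu ip] k by auto
    define C where "C = ?E * As k * ?Ei"
    have "similar_mat_wit C (As k) ?E ?Ei" unfolding C_def by (rule smw_I[OF ip Ac])
    then have Cs: "G_similar (G k) (As k) C" unfolding G_similar_def using EG by blast
    have "C $$ (p,q) = As k $$ (p,q) + s * As k $$ (r,q)"
      unfolding C_def using em_conj[OF Ac, where i=p and j=q and p=p and r=r and s=s and s'="- s"] pq pr rq by auto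
    also have "\<dots> = x" unfolding Ark s_def using nz by simp
    finally show "x \<in> vals" unfolding vals_def using Cs by auto
  qed
  then have "vals = UNIV" by auto
  then show ?thesis using st Fe by simp
qed

lemma pos_index: "p < q \<Longrightarrow> q < n \<Longrightarrow> \<exists>k<N. pos ! k = (p,q)"
proof -
  assume "p < q" "q < n"
  then have "(p,q) \<in> set pos" unfolding pos_set by simp
  then show ?thesis by (metis in_set_conv_nth)
qed

lemma F_lead_one:
  assumes "p < n" "q < n" "F $$ (p,q) \<noteq> 0" "\<forall>c<q. F $$ (p,c) = 0"
  shows "F $$ (p,q) = 1"
proof -
  have "p < q" using assms F_sup unfolding sup_mat_def by (metis not_less)
  then obtain k where k: "k < N" "pos ! k = (p,q)" using pos_index assms(2) by blast
  show ?thesis by (rule claim1[OF k assms(4,3)])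
qed

lemma F_lead_distinct:
  assumes "p < n" "r < n" "p \<noteq> r" "q < n"
    "F $$ (p,q) \<noteq> 0" "\<forall>c<q. F $$ (p,c) = 0" "F $$ (r,q) \<noteq> 0" "\<forall>c<q. F $$ (r,c) = 0"
  shows False
proof -
  have lt: "a < q" if "a < n" "F $$ (a,q) \<noteq> 0" for a
    using that F_sup unfolding sup_mat_def by (metis not_less)
  show False
  proof (cases "p < r")
    case True
    obtain k where k: "k < N" "pos ! k = (p,q)" using pos_index lt[OF assms(1,5)] assms(4) by blast
    have "F $$ (p,q) = 0" by (rule claim2[OF k True assms(2) assms(6) assms(8) assms(7)])
    then show False using assms(5) by simp
  next
    case False
    then have "r < p" using assms by auto
    obtain k where k: "k < N" "pos ! k = (r,q)" using pos_index lt[OF assms(2,7)] assms(4) by blast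
    have "F $$ (r,q) = 0" by (rule claim2[OF k \<open>r < p\<close> assms(1) assms(8) assms(6) assms(5)])
    then show False using assms(7) by simp
  qed
qed

end

lemma subperm_D:
  assumes "subpermutation n P" "i < n" "c < n" "P $$ (i,c) \<noteq> 0"
  shows "P $$ (i,c) = 1" "\<And>c'. c' < n \<Longrightarrow> c' \<noteq> c \<Longrightarrow> P $$ (i,c') = 0"
    "\<And>i'. i' < n \<Longrightarrow> i' \<noteq> i \<Longrightarrow> P $$ (i',c) = 0"
  using assms unfolding subpermutation_def by blast+

lemma subperm_carrier: "subpermutation n P \<Longrightarrow> P \<in> carrier_mat n n"
  unfolding subpermutation_def by auto

lemma row_prod:
  assumes P: "subpermutation n P" and W: "W \<in> carrier_mat n n" and ic: "i < n" "c < n" "P $$ (i,c) \<noteq> 0" and j: "j < n"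
  shows "(P * W) $$ (i,j) = W $$ (c,j)"
proof -
  have "(P * W) $$ (i,j) = (\<Sum>k<n. P $$ (i,k) * W $$ (k,j))"
    by (rule mult_entry) (use subperm_carrier[OF P] W ic j in auto)
  also have "\<dots> = P $$ (i,c) * W $$ (c,j)"
    by (rule sum_single) (use subperm_D[OF P ic] ic in auto)
  finally show ?thesis using subperm_D[OF P ic] by simp
qed

lemma row_prod0:
  assumes P: "subpermutation n P" and W: "W \<in> carrier_mat n n" and i: "i < n" "\<forall>c<n. P $$ (i,c) = 0" and j: "j < n"
  shows "(P * W) $$ (i,j) = 0"
proof -
  have "(P * W) $$ (i,j) = (\<Sum>k<n. P $$ (i,k) * W $$ (k,j))"
    by (rule mult_entry) (use subperm_carrier[OF P] W i j in auto)
  also have "\<dots> = 0" using i by simp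
  finally show ?thesis .
qed

lemma col_prod:
  assumes P: "subpermutation n P" and B: "B \<in> carrier_mat n n" and ac: "a < n" "c < n" "P $$ (a,c) \<noteq> 0" and i: "i < n"
  shows "(B * P) $$ (i,c) = B $$ (i,a)"
proof -
  have "(B * P) $$ (i,c) = (\<Sum>k<n. B $$ (i,k) * P $$ (k,c))"
    by (rule mult_entry) (use subperm_carrier[OF P] B ac i in auto)
  also have "\<dots> = B $$ (i,a) * P $$ (a,c)"
    by (rule sum_single) (use subperm_D[OF P ac] ac in auto)
  finally show ?thesis using subperm_D[OF P ac] by simp
qed

lemma col_prod0:
  assumes P: "subpermutation n P" and B: "B \<in> carrier_mat n n" and c: "c < n" "\<forall>a<n. P $$ (a,c) = 0" and i: "i < n"
  shows "(B * P) $$ (i,c) = 0"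
proof -
  have "(B * P) $$ (i,c) = (\<Sum>k<n. B $$ (i,k) * P $$ (k,c))"
    by (rule mult_entry) (use subperm_carrier[OF P] B c i in auto)
  also have "\<dots> = 0" using c by simp
  finally show ?thesis .
qed

lemma bruhat_unique:
  fixes P1 P2 W B :: "'a::field mat"
  assumes P1: "subpermutation n P1" and P2: "subpermutation n P2"
    and W: "W \<in> carrier_mat n n" "upper_triangular W" "\<And>c. c < n \<Longrightarrow> W $$ (c,c) \<noteq> 0"
    and B: "B \<in> carrier_mat n n" "upper_triangular B" "\<And>c. c < n \<Longrightarrow> B $$ (c,c) \<noteq> 0"
    and eq: "P1 * W = B * P2"
  shows "P1 = P2"
proof -
  define S1 where "S1 = {(i,c). i < n \<and> c < n \<and> P1 $$ (i,c) \<noteq> 0}"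
  define S2 where "S2 = {(i,c). i < n \<and> c < n \<and> P2 $$ (i,c) \<noteq> 0}"
  have fin: "finite S1" "finite S2"
  proof -
    have "S1 \<subseteq> {..<n} \<times> {..<n}" "S2 \<subseteq> {..<n} \<times> {..<n}" unfolding S1_def S2_def by auto
    then show "finite S1" "finite S2" by (auto intro: finite_subset)
  qed
  have "\<forall>x\<in>S1. \<exists>y. y \<in> S2 \<and> snd y = snd x \<and> fst x \<le> fst y"
  proof
    fix x assume x: "x \<in> S1"
    obtain i c where ic: "x = (i,c)" "i < n" "c < n" "P1 $$ (i,c) \<noteq> 0" using x unfolding S1_def by auto
    have "(P1 * W) $$ (i,c) = W $$ (c,c)" by (rule row_prod[OF P1 W(1) ic(2,3,4) ic(3)])
    then have nz: "(B * P2) $$ (i,c) \<noteq> 0" using W(3) ic eq by simp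
    have "\<exists>a<n. P2 $$ (a,c) \<noteq> 0"
    proof (rule ccontr)
      assume "\<not> (\<exists>a<n. P2 $$ (a,c) \<noteq> 0)"
      then have "(B * P2) $$ (i,c) = 0" using col_prod0[OF P2 B(1) ic(3) _ ic(2)] by auto
      then show False using nz by simp
    qed
    then obtain a where a: "a < n" "P2 $$ (a,c) \<noteq> 0" by auto
    have "(B * P2) $$ (i,c) = B $$ (i,a)" by (rule col_prod[OF P2 B(1) a(1) ic(3) a(2) ic(2)])
    then have "B $$ (i,a) \<noteq> 0" using nz by simp
    then have "i \<le> a" using B ic a by (metis not_le ut_D)
    then show "\<exists>y. y \<in> S2 \<and> snd y = snd x \<and> fst x \<le> fst y"
      using a ic unfolding S2_def by (intro exI[of _ "(a,c)"]) auto
  qed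
  then obtain f where f: "\<And>x. x \<in> S1 \<Longrightarrow> f x \<in> S2 \<and> snd (f x) = snd x \<and> fst x \<le> fst (f x)"
    by metis
  have "\<forall>y\<in>S2. \<exists>x. x \<in> S1 \<and> fst x = fst y \<and> snd x \<le> snd y"
  proof
    fix y assume y: "y \<in> S2"
    obtain a c where ac: "y = (a,c)" "a < n" "c < n" "P2 $$ (a,c) \<noteq> 0" using y unfolding S2_def by auto
    have "(B * P2) $$ (a,c) = B $$ (a,a)" by (rule col_prod[OF P2 B(1) ac(2,3,4) ac(2)])
    then have nz: "(P1 * W) $$ (a,c) \<noteq> 0" using B(3) ac eq by simp
    have "\<exists>c'<n. P1 $$ (a,c') \<noteq> 0"
    proof (rule ccontr)
      assume "\<not> (\<exists>c'<n. P1 $$ (a,c') \<noteq> 0)"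
      then have "(P1 * W) $$ (a,c) = 0" using row_prod0[OF P1 W(1) ac(2) _ ac(3)] by auto
      then show False using nz by simp
    qed
    then obtain c' where c': "c' < n" "P1 $$ (a,c') \<noteq> 0" by auto
    have "(P1 * W) $$ (a,c) = W $$ (c',c)" by (rule row_prod[OF P1 W(1) ac(2) c'(1) c'(2) ac(3)])
    then have "W $$ (c',c) \<noteq> 0" using nz by simp
    then have "c' \<le> c" using W ac c' by (metis not_le ut_D)
    then show "\<exists>x. x \<in> S1 \<and> fst x = fst y \<and> snd x \<le> snd y"
      using c' ac unfolding S1_def by (intro exI[of _ "(a,c')"]) auto
  qed
  then obtain g where g: "\<And>y. y \<in> S2 \<Longrightarrow> g y \<in> S1 \<and> fst (g y) = fst y \<and> snd (g y) \<le> snd y"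
    by metis
  have injf: "inj_on f S1"
  proof (rule inj_onI)
    fix x x' assume xx: "x \<in> S1" "x' \<in> S1" "f x = f x'"
    obtain i c where ic: "x = (i,c)" "i < n" "c < n" "P1 $$ (i,c) \<noteq> 0" using xx unfolding S1_def by auto
    obtain i' c' where ic': "x' = (i',c')" "i' < n" "c' < n" "P1 $$ (i',c') \<noteq> 0" using xx unfolding S1_def by auto
    have "c = c'" using f[OF xx(1)] f[OF xx(2)] xx(3) ic ic' by simp
    then show "x = x'" using subperm_D(3)[OF P1 ic(2,3,4)] ic ic' by (metis)
  qed
  have injg: "inj_on g S2"
  proof (rule inj_onI)
    fix y y' assume yy: "y \<in> S2" "y' \<in> S2" "g y = g y'"
    obtain a c where ac: "y = (a,c)" "a < n" "c < n" "P2 $$ (a,c) \<noteq> 0" using yy unfolding S2_def by auto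
    obtain a' c' where ac': "y' = (a',c')" "a' < n" "c' < n" "P2 $$ (a',c') \<noteq> 0" using yy unfolding S2_def by auto
    have "a = a'" using g[OF yy(1)] g[OF yy(2)] yy(3) ac ac' by simp
    then show "y = y'" using subperm_D(2)[OF P2 ac(2,3,4)] ac ac' by (metis)
  qed
  have fS: "f ` S1 \<subseteq> S2" using f by auto
  have gS: "g ` S2 \<subseteq> S1" using g by auto
  have c1: "card S1 \<le> card S2" using card_inj_on_le[OF injf fS fin(2)] .
  have c2: "card S2 \<le> card S1" using card_inj_on_le[OF injg gS fin(1)] .
  have fim: "f ` S1 = S2"
    by (rule card_subset_eq[OF fin(2) fS]) (use card_image[OF injf] c1 c2 in linarith)
  have gim: "g ` S2 = S1"
    by (rule card_subset_eq[OF fin(1) gS]) (use card_image[OF injg] c1 c2 in linarith)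
  define \<phi> where "\<phi> = (\<lambda>x::nat \<times> nat. int (fst x) - int (snd x))"
  have le1: "\<phi> x \<le> \<phi> (f x)" if x: "x \<in> S1" for x
  proof -
    have "snd (f x) = snd x" "fst x \<le> fst (f x)" using f[OF x] by auto
    then show ?thesis unfolding \<phi>_def by simp
  qed
  have le2: "\<phi> y \<le> \<phi> (g y)" if y: "y \<in> S2" for y
  proof -
    have "fst (g y) = fst y" "snd (g y) \<le> snd y" using g[OF y] by auto
    then show ?thesis unfolding \<phi>_def by simp
  qed
  have s1: "(\<Sum>x\<in>S1. \<phi> x) \<le> (\<Sum>x\<in>S1. \<phi> (f x))"
    by (rule sum_mono) (rule le1)
  have s2: "(\<Sum>x\<in>S1. \<phi> (f x)) = (\<Sum>y\<in>S2. \<phi> y)"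
    unfolding fim[symmetric] sum.reindex[OF injf] by (simp add: comp_def)
  have s3: "(\<Sum>y\<in>S2. \<phi> y) \<le> (\<Sum>y\<in>S2. \<phi> (g y))"
    by (rule sum_mono) (rule le2)
  have s4: "(\<Sum>y\<in>S2. \<phi> (g y)) = (\<Sum>x\<in>S1. \<phi> x)"
    unfolding gim[symmetric] sum.reindex[OF injg] by (simp add: comp_def)
  have "(\<Sum>x\<in>S1. \<phi> (f x)) = (\<Sum>x\<in>S1. \<phi> x)"
    using s1 s2 s3 s4 by linarith
  then have z: "(\<Sum>x\<in>S1. \<phi> (f x) - \<phi> x) = 0" by (simp add: sum_subtractf)
  have nn: "\<And>x. x \<in> S1 \<Longrightarrow> 0 \<le> \<phi> (f x) - \<phi> x" using le1 by simp
  have z2: "\<forall>x\<in>S1. \<phi> (f x) - \<phi> x = 0" using sum_nonneg_eq_0_iff[OF fin(1) nn] z by simp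
  have fid: "f x = x" if x: "x \<in> S1" for x
  proof -
    have "\<phi> (f x) = \<phi> x" using x \<open>\<forall>x\<in>S1. \<phi> (f x) - \<phi> x = 0\<close> by auto
    moreover have "snd (f x) = snd x" using f[OF x] by auto
    ultimately have "fst (f x) = fst x" unfolding \<phi>_def by simp
    then show ?thesis using \<open>snd (f x) = snd x\<close> by (simp add: prod_eq_iff)
  qed
  have sub: "S1 \<subseteq> S2"
  proof
    fix x assume x: "x \<in> S1"
    then show "x \<in> S2" using f[OF x] fid[OF x] by simp
  qed
  have S12: "S1 = S2" by (rule card_subset_eq[OF fin(2) sub]) (use c1 c2 in linarith)
  show "P1 = P2"
  proof (rule eq_matI)
    show "dim_row P1 = dim_row P2" "dim_col P1 = dim_col P2"
      using subperm_carrier[OF P1] subperm_carrier[OF P2] by auto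
    fix i j assume "i < dim_row P2" "j < dim_col P2"
    then have ij: "i < n" "j < n" using subperm_carrier[OF P2] by auto
    show "P1 $$ (i,j) = P2 $$ (i,j)"
    proof (cases "P1 $$ (i,j) = 0")
      case True
      then have "(i,j) \<notin> S2" using S12 ij unfolding S1_def by auto
      then show ?thesis using True ij unfolding S2_def by auto
    next
      case False
      then have "(i,j) \<in> S2" using S12 ij unfolding S1_def by auto
      then have "P2 $$ (i,j) \<noteq> 0" unfolding S2_def by auto
      then show ?thesis using subperm_D(1)[OF P1 ij False] subperm_D(1)[OF P2 ij] by simp
    qed
  qed
qed

lemma struct_QU:
  fixes A :: "'a::field mat"
  assumes A: "A \<in> carrier_mat n n"
  and L1: "\<And>p q. p < n \<Longrightarrow> q < n \<Longrightarrow> A $$ (p,q) \<noteq> 0 \<Longrightarrow> \<forall>c<q. A $$ (p,c) = 0 \<Longrightarrow> A $$ (p,q) = 1"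
  and L2: "\<And>p r q. p < n \<Longrightarrow> r < n \<Longrightarrow> p \<noteq> r \<Longrightarrow> q < n \<Longrightarrow> A $$ (p,q) \<noteq> 0 \<Longrightarrow> \<forall>c<q. A $$ (p,c) = 0
      \<Longrightarrow> A $$ (r,q) \<noteq> 0 \<Longrightarrow> \<forall>c<q. A $$ (r,c) = 0 \<Longrightarrow> False"
  shows "\<exists>Q' U. subpermutation n Q' \<and> U \<in> unitri_group n \<and> A = Q' * U"
proof -
  define nz where "nz i \<longleftrightarrow> (\<exists>c<n. A $$ (i,c) \<noteq> 0)" for i
  define ld where "ld i = (LEAST c. A $$ (i,c) \<noteq> 0)" for i
  have ld: "ld i < n" "A $$ (i, ld i) \<noteq> 0" "\<forall>c<ld i. A $$ (i,c) = 0" if "nz i" for i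
  proof -
    from that obtain c where c: "c < n" "A $$ (i,c) \<noteq> 0" by (auto simp: nz_def)
    show "A $$ (i, ld i) \<noteq> 0" unfolding ld_def by (rule LeastI[of _ c]) (use c in auto)
    have "ld i \<le> c" unfolding ld_def by (rule Least_le) (use c in auto)
    then show "ld i < n" using c by auto
    show "\<forall>c<ld i. A $$ (i,c) = 0" unfolding ld_def using not_less_Least by blast
  qed
  have one: "A $$ (i, ld i) = 1" if "i < n" "nz i" for i
    using L1[OF that(1) ld(1)[OF that(2)] ld(2)[OF that(2)] ld(3)[OF that(2)]] .
  have uniq: "i = i'" if "i < n" "i' < n" "nz i" "nz i'" "ld i = ld i'" for i i'
  proof (rule ccontr)
    assume "i \<noteq> i'"
    show False
      using L2[OF that(1,2) \<open>i \<noteq> i'\<close> ld(1)[OF that(3)] ld(2)[OF that(3)] ld(3)[OF that(3)]]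
        ld(2,3)[OF that(4)] that(5) by simp
  qed
  define Q' where "Q' = mat n n (\<lambda>(i,j). if nz i \<and> j = ld i then 1 else (0::'a))"
  define rw where "rw c = (SOME i. i < n \<and> nz i \<and> ld i = c)" for c
  define U where "U = mat n n (\<lambda>(c,j). if (\<exists>i<n. nz i \<and> ld i = c) then A $$ (rw c, j) else (if c = j then 1 else 0))"
  have rw: "rw (ld i) = i" if "i < n" "nz i" for i
  proof -
    have "rw (ld i) < n \<and> nz (rw (ld i)) \<and> ld (rw (ld i)) = ld i"
      unfolding rw_def by (rule someI[of _ i]) (use that in auto)
    then show ?thesis using uniq that by blast
  qed
  have Qh: "nz i \<and> j = ld i" if "i < n" "j < n" "Q' $$ (i,j) \<noteq> 0" for i j
    using that unfolding Q'_def by (auto split: if_splits)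
  have Qs: "subpermutation n Q'"
    unfolding subpermutation_def
  proof (intro conjI allI impI)
    show "Q' \<in> carrier_mat n n" unfolding Q'_def by auto
  next
    fix i j assume ij: "i < n" "j < n" "Q' $$ (i,j) \<noteq> 0"
    show "Q' $$ (i,j) = 1" using ij Qh[OF ij] unfolding Q'_def by auto
  next
    fix i j j' assume ij: "i < n" "j < n" "Q' $$ (i,j) \<noteq> 0" and j': "j' < n" "j' \<noteq> j"
    show "Q' $$ (i,j') = 0" using ij j' Qh[OF ij] unfolding Q'_def by auto
  next
    fix i j i' assume ij: "i < n" "j < n" "Q' $$ (i,j) \<noteq> 0" and i': "i' < n" "i' \<noteq> i"
    have h: "nz i" "j = ld i" using Qh[OF ij] by auto
    have "\<not> (nz i' \<and> j = ld i')" using uniq[OF ij(1) i'(1)] h i' by auto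
    then show "Q' $$ (i',j) = 0" unfolding Q'_def using i' ij by auto
  qed
  have Uc: "U \<in> carrier_mat n n" unfolding U_def by auto
  have Uent: "U $$ (c,j) = (if (\<exists>i<n. nz i \<and> ld i = c) then A $$ (rw c, j) else (if c = j then 1 else 0))"
    if "c < n" "j < n" for c j
    unfolding U_def using that by simp
  have Uu: "U \<in> unitri_group n"
    unfolding unitri_group_def
  proof (intro CollectI conjI allI impI)
    show "U \<in> carrier_mat n n" by (rule Uc)
    show "upper_triangular U"
    proof (rule upper_triangularI)
      fix c j assume cj: "j < c" "c < dim_row U"
      then have cj': "c < n" "j < n" using Uc by auto
      show "U $$ (c,j) = 0"
      proof (cases "\<exists>i<n. nz i \<and> ld i = c")
        case True
        then obtain i where i: "i < n" "nz i" "ld i = c" by auto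
        then have "U $$ (c,j) = A $$ (i,j)" using Uent[OF cj'] rw[OF i(1,2)] by auto
        then show ?thesis using ld(3)[OF i(2)] i cj by auto
      next
        case False
        then show ?thesis using Uent[OF cj'] cj by auto
      qed
    qed
    fix c assume c: "c < n"
    show "U $$ (c,c) = 1"
    proof (cases "\<exists>i<n. nz i \<and> ld i = c")
      case True
      then obtain i where i: "i < n" "nz i" "ld i = c" by auto
      then have "U $$ (c,c) = A $$ (i,ld i)" using Uent[OF c c] rw[OF i(1,2)] by auto
      then show ?thesis using one[OF i(1,2)] by simp
    next
      case False
      then show ?thesis using Uent[OF c c] by auto
    qed
  qed
  have "A = Q' * U"
  proof (rule eq_matI)
    show "dim_row A = dim_row (Q' * U)" "dim_col A = dim_col (Q' * U)" using A Uc unfolding Q'_def by auto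
    fix i j assume "i < dim_row (Q' * U)" "j < dim_col (Q' * U)"
    then have ij: "i < n" "j < n" using Uc unfolding Q'_def by auto
    have Qc: "Q' \<in> carrier_mat n n" unfolding Q'_def by auto
    have e: "(Q' * U) $$ (i,j) = (\<Sum>c<n. Q' $$ (i,c) * U $$ (c,j))" by (rule mult_entry[OF Qc Uc ij])
    show "A $$ (i,j) = (Q' * U) $$ (i,j)"
    proof (cases "nz i")
      case True
      have "(\<Sum>c<n. Q' $$ (i,c) * U $$ (c,j)) = Q' $$ (i, ld i) * U $$ (ld i, j)"
        by (rule sum_single) (use ld(1)[OF True] ij in \<open>auto simp: Q'_def\<close>)
      also have "\<dots> = U $$ (ld i, j)" using ld(1)[OF True] ij True by (simp add: Q'_def)
      also have "\<dots> = A $$ (i,j)" using Uent[OF ld(1)[OF True] ij(2)] rw[OF ij(1) True] ij True by auto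
      finally show ?thesis using e by simp
    next
      case False
      have "(\<Sum>c<n. Q' $$ (i,c) * U $$ (c,j)) = 0"
        by (rule sum.neutral) (use False ij in \<open>auto simp: Q'_def\<close>)
      moreover have "A $$ (i,j) = 0" using False ij unfolding nz_def by auto
      ultimately show ?thesis using e by simp
    qed
  qed
  then show ?thesis using Qs Uu by blast
qed

theorem theorem2p5:
  fixes A Q :: "'a::field mat" and n :: nat
  assumes "A \<in> strict_upper_set n" and "is_belitskii_cf n A"
    and "subpermutation n Q"
    and "\<exists>B \<in> upper_tri_group n. \<exists>B' \<in> upper_tri_group n. A = B * Q * B'"
  shows "\<exists>U \<in> unitri_group n. A = Q * U"
proof -
  obtain A0 As where H: "A0 \<in> strict_upper_set n" "belitskii_run n A0 As"
      "As (length (belitskii_positions n)) = A"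
    using assms(2) unfolding is_belitskii_cf_def belitskii_cf_of_def by blast
  interpret brun n As
    using H unfolding belitskii_run_def by unfold_locales auto
  have Ac: "A \<in> carrier_mat n n" using assms(1) unfolding strict_upper_set_def by auto
  have L1: "A $$ (p,q) = 1" if "p < n" "q < n" "A $$ (p,q) \<noteq> 0" "\<forall>c<q. A $$ (p,c) = 0" for p q
    using F_lead_one[of p q] that unfolding H(3) by blast
  have L2: False if "p < n" "r < n" "p \<noteq> r" "q < n" "A $$ (p,q) \<noteq> 0" "\<forall>c<q. A $$ (p,c) = 0"
      "A $$ (r,q) \<noteq> 0" "\<forall>c<q. A $$ (r,c) = 0" for p r q
    using F_lead_distinct[of p r q] that unfolding H(3) by blast
  have "\<exists>Q' U. subpermutation n Q' \<and> U \<in> unitri_group n \<and> A = Q' * U"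
    by (rule struct_QU[OF Ac]) (blast intro: L1, blast intro: L2)
  then obtain Q' U where QU: "subpermutation n Q'" "U \<in> unitri_group n" "A = Q' * U"
    by blast
  obtain B B' where B: "B \<in> upper_tri_group n" "B' \<in> upper_tri_group n" "A = B * Q * B'"
    using assms(4) by blast
  obtain Bi' where Bi': "ipair n B' Bi'" using utg_inv[OF B(2)] by blast
  obtain Bi where Bi: "ipair n B Bi" using utg_inv[OF B(1)] by blast
  have Uc: "U \<in> carrier_mat n n" "upper_triangular U" "\<And>c. c < n \<Longrightarrow> U $$ (c,c) = 1"
    using QU(2) unfolding unitri_group_def by auto
  have Bic: "Bi' \<in> carrier_mat n n" "Bi' * B' = 1\<^sub>m n" "B' \<in> carrier_mat n n" "B' * Bi' = 1\<^sub>m n"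
    using Bi' unfolding ipair_def by auto
  have Biu: "upper_triangular Bi'" by (rule utg_inv_ut[OF B(2) Bi'])
  have B'u: "upper_triangular B'" using B(2) unfolding upper_tri_group_def by auto
  have Bid: "Bi' $$ (c,c) \<noteq> 0" if "c < n" for c
    by (rule ut_diag_nz[OF Bic(1) Biu Bic(3) Bic(2) that])
  define W where "W = U * Bi'"
  have Wc: "W \<in> carrier_mat n n" unfolding W_def using Uc Bic by auto
  have Wu: "upper_triangular W" unfolding W_def by (rule ut_mult(1)[OF Uc(1,2) Bic(1) Biu])
  have Wd: "W $$ (c,c) \<noteq> 0" if "c < n" for c
    unfolding W_def using ut_mult(2)[OF Uc(1,2) Bic(1) Biu that] Uc(3)[OF that] Bid[OF that] by simp
  have Bc: "B \<in> carrier_mat n n" "upper_triangular B" using B(1) unfolding upper_tri_group_def by auto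
  have Bic': "Bi \<in> carrier_mat n n" "B * Bi = 1\<^sub>m n" using Bi unfolding ipair_def by auto
  have Bd: "B $$ (c,c) \<noteq> 0" if "c < n" for c
    by (rule ut_diag_nz[OF Bc(1) Bc(2) Bic'(1) Bic'(2) that])
  have Qc: "Q \<in> carrier_mat n n" "Q' \<in> carrier_mat n n" using assms(3) QU(1) subperm_carrier by auto
  have "Q' * W = (Q' * U) * Bi'" unfolding W_def using Qc Uc Bic by (simp add: assoc_mult_mat[of _ n n _ n _ n])
  also have "\<dots> = A * Bi'" using QU(3) by simp
  also have "\<dots> = (B * Q) * (B' * Bi')" unfolding B(3) using Bc Qc Bic
    by (simp add: assoc_mult_mat[of _ n n _ n _ n])
  also have "\<dots> = B * Q" using Bic Bc Qc by simp
  finally have eq: "Q' * W = B * Q" .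
  have "Q' = Q" by (rule bruhat_unique[OF QU(1) assms(3) Wc Wu Wd Bc Bd eq])
  then show ?thesis using QU by blast
qed

end
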